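(* Let $\mathbf X\in\mathbb R^n$ be a random vector with $\|\mathbf X\|_\infty\le1$ and $\|\mathbf X\|_1\le s$ almost surely, with mean $\boldsymbol\mu^*$ and covariance matrix $\boldsymbol\Sigma^*$, and let $\nu^*_i=\mathbb E|X_i|$. Let $\mathcal A$ be a family of subsets of $[n]$ and $m=\max\{|A|:A\in\mathcal A\}$. Then for every $A\in\mathcal A$ and every $i\in[n]$, $$\sum_{j\in A}0\vee\Sigma^*_{ij}\le 2\nu^*_i(s\wedge m).$$
   Context: $\boldsymbol\Sigma^*=\mathbb E[(\mathbf X-\boldsymbol\mu^* )(\mathbf X-\boldsymbol\mu^* )^{\mathsf T}]$; $a\vee b=\max(a,b)$, $a\wedge b=\min(a,b)$. *)

theory Defs
  imports "HOL-Probability.Probability"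
begin

definition mean_vec :: "'a measure \<Rightarrow> ('a \<Rightarrow> real ^ 'n) \<Rightarrow> 'n \<Rightarrow> real" where
  "mean_vec M X i = (\<integral>\<omega>. X \<omega> $ i \<partial>M)"

definition cov_mat :: "'a measure \<Rightarrow> ('a \<Rightarrow> real ^ 'n) \<Rightarrow> 'n \<Rightarrow> 'n \<Rightarrow> real" where
  "cov_mat M X i j =
     (\<integral>\<omega>. (X \<omega> $ i - mean_vec M X i) * (X \<omega> $ j - mean_vec M X j) \<partial>M)"

definition abs_mean :: "'a measure \<Rightarrow> ('a \<Rightarrow> real ^ 'n) \<Rightarrow> 'n \<Rightarrow> real" where
  "abs_mean M X i = (\<integral>\<omega>. \<bar>X \<omega> $ i\<bar> \<partial>M)"

end

theory Submission
  imports Defs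
begin

theorem lemma1:
  fixes M :: "'a measure" and X :: "'a \<Rightarrow> real ^ 'n" and s :: real
    and \<A> :: "'n set set" and A :: "'n set" and i :: 'n
  assumes "prob_space M"
    and "X \<in> borel_measurable M"
    and "AE \<omega> in M. \<forall>k. \<bar>X \<omega> $ k\<bar> \<le> 1"
    and "AE \<omega> in M. (\<Sum>k\<in>UNIV. \<bar>X \<omega> $ k\<bar>) \<le> s"
    and "A \<in> \<A>"
  shows "(\<Sum>j\<in>A. max 0 (cov_mat M X i j))
           \<le> 2 * abs_mean M X i * min s (real (Max (card ` \<A>)))"
proof -
  interpret prob_space M by fact
  have meas: "\<And>k. (\<lambda>\<omega>. X \<omega> $ k) \<in> borel_measurable M"
    by (rule measurable_compose[OF assms(2) borel_measurable_continuous_onI]) (intro continuous_on_component continuous_on_id)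
  have bnd: "AE \<omega> in M. \<bar>X \<omega> $ k\<bar> \<le> 1" for k using assms(3) by eventually_elim auto
  have intk: "integrable M (\<lambda>\<omega>. X \<omega> $ k)" for k
    by (rule integrable_const_bound[where B=1]) (use bnd meas in auto)
  have intabs: "integrable M (\<lambda>\<omega>. \<bar>X \<omega> $ k\<bar>)" for k using intk by auto
  have intprod: "integrable M (\<lambda>\<omega>. X \<omega> $ i * X \<omega> $ k)" for k
  proof (rule integrable_const_bound[where B=1])
    show "AE \<omega> in M. norm (X \<omega> $ i * X \<omega> $ k) \<le> 1"
      using assms(3) by eventually_elim (auto simp: abs_mult intro: mult_le_one)
  qed (use meas in auto)
  have intprodabs: "integrable M (\<lambda>\<omega>. \<bar>X \<omega> $ i\<bar> * \<bar>X \<omega> $ k\<bar>)" for k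
    using intprod[of k] by (simp add: abs_mult[symmetric])
  define \<nu> where "\<nu> = abs_mean M X i"
  have \<nu>0: "\<nu> \<ge> 0" unfolding \<nu>_def abs_mean_def by simp
  define \<mu> where "\<mu> k = mean_vec M X k" for k
  have mu_abs: "\<bar>\<mu> k\<bar> \<le> abs_mean M X k" for k
    unfolding \<mu>_def mean_vec_def abs_mean_def by (rule integral_abs_bound)
  have cov_eq: "cov_mat M X i j = (\<integral>\<omega>. X \<omega> $ i * X \<omega> $ j \<partial>M) - \<mu> i * \<mu> j" for j
  proof -
    have "(\<lambda>\<omega>. (X \<omega> $ i - \<mu> i) * (X \<omega> $ j - \<mu> j)) =
          (\<lambda>\<omega>. (X \<omega> $ i * X \<omega> $ j - \<mu> j * X \<omega> $ i) - (\<mu> i * X \<omega> $ j - \<mu> i * \<mu> j))"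
      by (auto simp: algebra_simps)
    then have "cov_mat M X i j = (\<integral>\<omega>. (X \<omega> $ i * X \<omega> $ j - \<mu> j * X \<omega> $ i) - (\<mu> i * X \<omega> $ j - \<mu> i * \<mu> j) \<partial>M)"
      unfolding cov_mat_def \<mu>_def by simp
    also have "\<dots> = (\<integral>\<omega>. X \<omega> $ i * X \<omega> $ j \<partial>M) - \<mu> j * \<mu> i - (\<mu> i * \<mu> j - \<mu> i * \<mu> j)"
      using intk intprod prob_space
      by (simp add: integral_diff integral_mult_right_zero \<mu>_def mean_vec_def)
    finally show ?thesis by simp
  qed
  have term_bnd: "max 0 (cov_mat M X i j) \<le> (\<integral>\<omega>. \<bar>X \<omega> $ i\<bar> * \<bar>X \<omega> $ j\<bar> \<partial>M) + \<nu> * abs_mean M X j" for j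
  proof -
    have a: "(\<integral>\<omega>. X \<omega> $ i * X \<omega> $ j \<partial>M) \<le> (\<integral>\<omega>. \<bar>X \<omega> $ i\<bar> * \<bar>X \<omega> $ j\<bar> \<partial>M)"
      using intprod intprodabs by (intro integral_mono) (auto simp: abs_mult[symmetric])
    have b: "- (\<mu> i * \<mu> j) \<le> \<nu> * abs_mean M X j"
    proof -
      have "- (\<mu> i * \<mu> j) \<le> \<bar>\<mu> i\<bar> * \<bar>\<mu> j\<bar>" by (simp add: abs_mult[symmetric])
      also have "\<dots> \<le> \<nu> * abs_mean M X j"
        using mu_abs[of i] mu_abs[of j] \<nu>0 unfolding \<nu>_def by (intro mult_mono) auto
      finally show ?thesis .
    qed
    have c: "0 \<le> (\<integral>\<omega>. \<bar>X \<omega> $ i\<bar> * \<bar>X \<omega> $ j\<bar> \<partial>M) + \<nu> * abs_mean M X j"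
      using \<nu>0 by (intro add_nonneg_nonneg mult_nonneg_nonneg) (auto simp: abs_mean_def)
    show ?thesis using a b c cov_eq[of j] by simp
  qed
  define c where "c = min s (real (card A))"
  have sumA: "AE \<omega> in M. (\<Sum>j\<in>A. \<bar>X \<omega> $ j\<bar>) \<le> c"
    using assms(3,4)
  proof eventually_elim
    case (elim \<omega>)
    have "(\<Sum>j\<in>A. \<bar>X \<omega> $ j\<bar>) \<le> (\<Sum>k\<in>UNIV. \<bar>X \<omega> $ k\<bar>)"
      by (intro sum_mono2) auto
    moreover have "(\<Sum>j\<in>A. \<bar>X \<omega> $ j\<bar>) \<le> (\<Sum>j\<in>A. 1)"
      using elim(1) by (intro sum_mono) auto
    ultimately show ?case using elim(2) unfolding c_def by simp
  qed
  have "(\<Sum>j\<in>A. max 0 (cov_mat M X i j))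
      \<le> (\<Sum>j\<in>A. (\<integral>\<omega>. \<bar>X \<omega> $ i\<bar> * \<bar>X \<omega> $ j\<bar> \<partial>M) + \<nu> * abs_mean M X j)"
    by (intro sum_mono term_bnd)
  also have "\<dots> = (\<integral>\<omega>. \<bar>X \<omega> $ i\<bar> * (\<Sum>j\<in>A. \<bar>X \<omega> $ j\<bar>) \<partial>M) + \<nu> * (\<integral>\<omega>. (\<Sum>j\<in>A. \<bar>X \<omega> $ j\<bar>) \<partial>M)"
    using intprodabs intabs
    by (simp add: sum.distrib sum_distrib_left abs_mean_def integral_sum)
  also have "\<dots> \<le> (\<integral>\<omega>. \<bar>X \<omega> $ i\<bar> * c \<partial>M) + \<nu> * (\<integral>\<omega>. c \<partial>M)"
  proof (intro add_mono mult_left_mono \<nu>0 integral_mono_AE)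
    show "AE \<omega> in M. \<bar>X \<omega> $ i\<bar> * (\<Sum>j\<in>A. \<bar>X \<omega> $ j\<bar>) \<le> \<bar>X \<omega> $ i\<bar> * c"
      using sumA by eventually_elim (auto intro: mult_left_mono)
  qed (use sumA intabs intprodabs in \<open>auto simp: sum_distrib_left\<close>)
  also have "\<dots> = 2 * \<nu> * c"
    by (simp add: \<nu>_def abs_mean_def prob_space)
  also have "\<dots> \<le> 2 * \<nu> * min s (real (Max (card ` \<A>)))"
  proof -
    have fin: "finite \<A>" by (rule finite_subset[of _ "Pow UNIV"]) auto
    have "card A \<le> Max (card ` \<A>)" using fin assms(5) by (intro Max_ge) auto
    then have "c \<le> min s (real (Max (card ` \<A>)))" unfolding c_def by auto
    then show ?thesis using \<nu>0 by (intro mult_left_mono) auto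
  qed
  finally show ?thesis unfolding \<nu>_def .
qed

end
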